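(* Let $b\in\mathbb{R}$. For $X=(y^1,y^2,y^3,x^1,x^2,x^3,z^1,z^2,z^3)^T\in\mathbb{C}^9$ write $y^\pm=y^1\pm\mathrm{i}y^2$, $x^\pm=x^1\pm\mathrm{i}x^2$, $z^\pm=z^1\pm\mathrm{i}z^2$, and $$\mathcal{L}_X(\lambda)=\frac{\mathrm{i}}{2}\begin{pmatrix}u(\lambda)&v(\lambda)\\ w(\lambda)&-u(\lambda)\end{pmatrix},\quad u=b+\frac{y^3}{\lambda}+\frac{x^3}{\lambda^2}+\frac{z^3}{\lambda^3},\ v=\frac{y^-}{\lambda}+\frac{x^-}{\lambda^2}+\frac{z^-}{\lambda^3},\ w=\frac{y^+}{\lambda}+\frac{x^+}{\lambda^2}+\frac{z^+}{\lambda^3}.$$ Let $\eta\in\mathbb{C}$, $\eta_1=\eta$, $\eta_2=\bar\eta$, and let $\mu_1,\mu_2\in\mathbb{C}$ satisfy $4\mu_j^2+u(\eta_j)^2+v(\eta_j)w(\eta_j)=0$ ($j=1,2$). Define (whenever the denominators are nonzero) $$s=\frac{u(\eta_1)-\mu_1}{v(\eta_1)},\qquad t=\frac{(\eta_1-\eta_2)(u(\eta_1)+\mu_1)(u(\eta_2)-\mu_2)}{(u(\eta_1)+\mu_1)w(\eta_2)-(u(\eta_2)-\mu_2)w(\eta_1)},$$ $$\mathcal{M}(\lambda)=\begin{pmatrix}\lambda-\eta_1+st& t\\ -s^2t+(\eta_1-\eta_2)s&\lambda-\eta_2-st\end{pmatrix}.$$ Suppose $\breve X\in\mathbb{C}^9$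 is such that $\mathcal{M}(\lambda)\mathcal{L}_X(\lambda)=\mathcal{L}_{\breve X}(\lambda)\mathcal{M}(\lambda)$ for all $\lambda$ (this defines the two-point Bäcklund transformation $X\mapsto\breve X$). Then $$\breve X=\Phi\,X+X_0,\qquad \Phi=\begin{pmatrix}\mathbb{1}_3&0&0\\ A&\mathbb{1}_3&0\\ B&A&\mathbb{1}_3\end{pmatrix},$$ where $A,B$ are $3\times3$ matrices depending only on $s,t,\eta$, and $X_0\in\mathbb{C}^9$ is a vector depending only on $s,t,\eta$ and $b$ (here $\mathbb 1_3$ is the $3\times3$ identity and $0$ the $3\times3$ zero matrix).
   Context: $\mathrm{i}$ is the imaginary unit and $\bar\eta$ the complex conjugate of $\eta$. The quantities $s,t$ themselves depend on $X$, so the map $X\mapsto\breve X$ is nonlinear; the claim concerns the dependence of $\breve X$ on $X$ with $s,t,\eta$ regarded as parameters. *)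

theory Defs
  imports "HOL-Analysis.Analysis"
begin

text \<open>A point X = (y^1,y^2,y^3,x^1,x^2,x^3,z^1,z^2,z^3) of C^9 is represented by its
  three blocks (y, x, z), each in complex^3 (components indexed 1,2,3).\<close>

type_synonym pt9 = "(complex^3) \<times> (complex^3) \<times> (complex^3)"

definition yb :: "pt9 \<Rightarrow> complex^3" where "yb X = fst X"
definition xb :: "pt9 \<Rightarrow> complex^3" where "xb X = fst (snd X)"
definition zb :: "pt9 \<Rightarrow> complex^3" where "zb X = snd (snd X)"

definition mat2 :: "complex \<Rightarrow> complex \<Rightarrow> complex \<Rightarrow> complex \<Rightarrow> complex^2^2" where
  "mat2 a11 a12 a21 a22 = (\<chi> i j. if i = 1 then (if j = 1 then a11 else a12)
                                   else (if j = 1 then a21 else a22))"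

definition uL :: "real \<Rightarrow> pt9 \<Rightarrow> complex \<Rightarrow> complex" where
  "uL b X l = complex_of_real b + yb X $ 3 / l + xb X $ 3 / l^2 + zb X $ 3 / l^3"

definition vL :: "pt9 \<Rightarrow> complex \<Rightarrow> complex" where
  "vL X l = (yb X $ 1 - \<i> * yb X $ 2) / l + (xb X $ 1 - \<i> * xb X $ 2) / l^2
            + (zb X $ 1 - \<i> * zb X $ 2) / l^3"

definition wL :: "pt9 \<Rightarrow> complex \<Rightarrow> complex" where
  "wL X l = (yb X $ 1 + \<i> * yb X $ 2) / l + (xb X $ 1 + \<i> * xb X $ 2) / l^2
            + (zb X $ 1 + \<i> * zb X $ 2) / l^3"

definition Lax :: "real \<Rightarrow> pt9 \<Rightarrow> complex \<Rightarrow> complex^2^2" where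
  "Lax b X l = mat2 (\<i>/2 * uL b X l) (\<i>/2 * vL X l) (\<i>/2 * wL X l) (\<i>/2 * - uL b X l)"

definition sB :: "real \<Rightarrow> pt9 \<Rightarrow> complex \<Rightarrow> complex \<Rightarrow> complex" where
  "sB b X eta1 mu1 = (uL b X eta1 - mu1) / vL X eta1"

definition tden :: "real \<Rightarrow> pt9 \<Rightarrow> complex \<Rightarrow> complex \<Rightarrow> complex \<Rightarrow> complex \<Rightarrow> complex" where
  "tden b X eta1 eta2 mu1 mu2 =
     (uL b X eta1 + mu1) * wL X eta2 - (uL b X eta2 - mu2) * wL X eta1"

definition tB :: "real \<Rightarrow> pt9 \<Rightarrow> complex \<Rightarrow> complex \<Rightarrow> complex \<Rightarrow> complex \<Rightarrow> complex" where
  "tB b X eta1 eta2 mu1 mu2 =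
     (eta1 - eta2) * (uL b X eta1 + mu1) * (uL b X eta2 - mu2) / tden b X eta1 eta2 mu1 mu2"

definition Mdress :: "complex \<Rightarrow> complex \<Rightarrow> complex \<Rightarrow> complex \<Rightarrow> complex \<Rightarrow> complex^2^2" where
  "Mdress eta1 eta2 s t l =
     mat2 (l - eta1 + s * t) t ((- (s^2 * t)) + (eta1 - eta2) * s) (l - eta2 - s * t)"

text \<open>Action of Phi = [[1,0,0],[A,1,0],[B,A,1]] (3x3 blocks) on X = (y,x,z).\<close>
definition Phi_apply :: "complex^3^3 \<Rightarrow> complex^3^3 \<Rightarrow> pt9 \<Rightarrow> pt9" where
  "Phi_apply A B X = (yb X, A *v yb X + xb X, B *v yb X + A *v xb X + zb X)"

end

theory Submission imports Defs begin

lemma poly3_zero: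
  fixes c0 c1 c2 c3 :: complex
  assumes "\<And>l. l \<noteq> 0 \<Longrightarrow> c0 + c1*l + c2*l^2 + c3*l^3 = 0"
  shows "c0 = 0 \<and> c1 = 0 \<and> c2 = 0 \<and> c3 = 0"
proof -
  define c where "c = (\<lambda>i::nat. [c0,c1,c2,c3] ! i)"
  have sum: "(\<Sum>i\<le>3. c i * z^i) = c0 + c1*z + c2*z^2 + c3*z^3" for z
    by (simp add: c_def numeral_3_eq_3 algebra_simps power2_eq_square power3_eq_cube)
  have "UNIV - {0} \<subseteq> {z. (\<Sum>i\<le>3. c i * z^i) = 0}"
    using assms by (auto simp: sum)
  moreover have "infinite (UNIV - {0::complex})"
    by (simp add: infinite_UNIV_char_0)
  ultimately have "infinite {z. (\<Sum>i\<le>3. c i * z^i) = 0}"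
    using finite_subset by blast
  then have "\<forall>k\<le>3. c k = 0" using polyfun_finite_roots[of c 3] by auto
  then have "c 0 = 0" "c 1 = 0" "c 2 = 0" "c 3 = 0" by auto
  then show ?thesis by (simp add: c_def)
qed

lemma mat2_mult:
  "mat2 a b c d ** mat2 e f g h = mat2 (a*e + b*g) (a*f + b*h) (c*e + d*g) (c*f + d*h)"
  by (simp add: vec_eq_iff matrix_matrix_mult_def mat2_def sum_2 forall_2)

lemma mat2_eq:
  "mat2 a b c d = mat2 e f g h \<longleftrightarrow> a = e \<and> b = f \<and> c = g \<and> d = h"
  by (auto simp add: vec_eq_iff mat2_def forall_2)

definition PP :: "complex^3 \<Rightarrow> complex" where "PP y = y$1 + \<i> * y$2"
definition MM :: "complex^3 \<Rightarrow> complex" where "MM y = y$1 - \<i> * y$2"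
definition fromPM :: "complex \<Rightarrow> complex \<Rightarrow> complex \<Rightarrow> complex^3" where
  "fromPM P M T = vector [(P+M)/2, -\<i>*(P-M)/2, T]"

lemma PP_add[simp]: "PP (a + b) = PP a + PP b" by (simp add: PP_def algebra_simps)
lemma MM_add[simp]: "MM (a + b) = MM a + MM b" by (simp add: MM_def algebra_simps)
lemma PP_from[simp]: "PP (fromPM P M T) = P" by (simp add: PP_def fromPM_def field_simps)
lemma MM_from[simp]: "MM (fromPM P M T) = M" by (simp add: MM_def fromPM_def field_simps)
lemma T_from[simp]: "fromPM P M T $ 3 = T" by (simp add: fromPM_def)

lemma y1_pm: "y$1 = (PP y + MM y)/2" by (simp add: PP_def MM_def)
lemma y2_pm: "y$2 = -\<i>*(PP y - MM y)/2" by (simp add: PP_def MM_def field_simps)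

lemma pm_eq: "PP y = PP z \<Longrightarrow> MM y = MM z \<Longrightarrow> y$3 = z$3 \<Longrightarrow> y = z"
  unfolding vec_eq_iff forall_3 by (metis y1_pm y2_pm)

lemma linear_fromPM:
  "Vector_Spaces.linear (*s) (*s) (\<lambda>y::complex^3. fromPM (a*PP y + b*MM y + c*y$3) (d*PP y + e*MM y + f*y$3) (g*PP y + h*MM y + k*y$3))"
  unfolding Vector_Spaces.linear_iff
  apply (auto simp: vec.vector_space_axioms vec_eq_iff forall_3 fromPM_def PP_def MM_def)
  apply (simp_all add: field_simps)
  done

lemma ent11:
  fixes l e1 e2 s t B u1 u2 u3 U1 U2 U3 w1 w2 w3 V1 V2 V3 :: complex
  assumes "\<And>l. l \<noteq> 0 \<Longrightarrow>
    (l - e1 + s*t) * (\<i>/2 * (B + u1/l + u2/l^2 + u3/l^3)) + t * (\<i>/2 * (w1/l + w2/l^2 + w3/l^3))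
    = (\<i>/2 * (B + U1/l + U2/l^2 + U3/l^3)) * (l - e1 + s*t)
      + (\<i>/2 * (V1/l + V2/l^2 + V3/l^3)) * ((- (s^2 * t)) + (e1 - e2) * s)"
  shows "U1 = u1 \<and> U2 = u2 + (s*t - e1)*(u1-U1) + t*w1 - ((- (s^2 * t)) + (e1 - e2) * s)*V1
     \<and> U3 = u3 + (s*t - e1)*(u2-U2) + t*w2 - ((- (s^2 * t)) + (e1 - e2) * s)*V2"
proof -
  define P where "P = s*t - e1"
  define Q where "Q = (- (s^2 * t)) + (e1 - e2) * s"
  have "(P*(u3-U3) + t*w3 - Q*V3) + ((u3-U3) + P*(u2-U2) + t*w2 - Q*V2)*l
     + ((u2-U2) + P*(u1-U1) + t*w1 - Q*V1)*l^2 + (u1-U1)*l^3 = 0" if "l \<noteq> 0" for l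
  proof -
    have e: "(l - e1 + s*t) * (\<i>/2 * (B + u1/l + u2/l^2 + u3/l^3)) + t * (\<i>/2 * (w1/l + w2/l^2 + w3/l^3))
    - ((\<i>/2 * (B + U1/l + U2/l^2 + U3/l^3)) * (l - e1 + s*t)
      + (\<i>/2 * (V1/l + V2/l^2 + V3/l^3)) * ((- (s^2 * t)) + (e1 - e2) * s)) = 0"
      using assms[OF that] by simp
    have "l^3 * ((l - e1 + s*t) * (\<i>/2 * (B + u1/l + u2/l^2 + u3/l^3)) + t * (\<i>/2 * (w1/l + w2/l^2 + w3/l^3))
    - ((\<i>/2 * (B + U1/l + U2/l^2 + U3/l^3)) * (l - e1 + s*t)
      + (\<i>/2 * (V1/l + V2/l^2 + V3/l^3)) * ((- (s^2 * t)) + (e1 - e2) * s)))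
     = \<i>/2 * ((P*(u3-U3) + t*w3 - Q*V3) + ((u3-U3) + P*(u2-U2) + t*w2 - Q*V2)*l
     + ((u2-U2) + P*(u1-U1) + t*w1 - Q*V1)*l^2 + (u1-U1)*l^3)"
      using that unfolding P_def Q_def
      by (simp add: field_simps power2_eq_square power3_eq_cube)
    then show ?thesis using e by simp
  qed
  from poly3_zero[OF this] have h: "P*(u3-U3) + t*w3 - Q*V3 = 0" "(u3-U3) + P*(u2-U2) + t*w2 - Q*V2 = 0"
     "(u2-U2) + P*(u1-U1) + t*w1 - Q*V1 = 0" "u1-U1 = 0" by auto
  show ?thesis unfolding P_def[symmetric] Q_def[symmetric]
  proof (intro conjI)
    show "U1 = u1" using h(4) by simp
    have "U2 = U2 + ((u2-U2) + P*(u1-U1) + t*w1 - Q*V1)" using h(3) by simp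
    also have "\<dots> = u2 + P*(u1-U1) + t*w1 - Q*V1" by (simp add: algebra_simps)
    finally show "U2 = u2 + P*(u1-U1) + t*w1 - Q*V1" .
    have "U3 = U3 + ((u3-U3) + P*(u2-U2) + t*w2 - Q*V2)" using h(2) by simp
    also have "\<dots> = u3 + P*(u2-U2) + t*w2 - Q*V2" by (simp add: algebra_simps)
    finally show "U3 = u3 + P*(u2-U2) + t*w2 - Q*V2" .
  qed
qed


lemma ent12:
  fixes l e1 e2 s t B u1 u2 u3 U1 U2 U3 a1 a2 a3 V1 V2 V3 :: complex
  assumes "\<And>l. l \<noteq> 0 \<Longrightarrow>
    (l - e1 + s*t) * (\<i>/2 * (a1/l + a2/l^2 + a3/l^3)) + t * (\<i>/2 * - (B + u1/l + u2/l^2 + u3/l^3))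
    = (\<i>/2 * (B + U1/l + U2/l^2 + U3/l^3)) * t
      + (\<i>/2 * (V1/l + V2/l^2 + V3/l^3)) * (l - e2 - s*t)"
  shows "V1 = a1 - 2*B*t \<and> V2 = a2 + (s*t - e1)*a1 - (- e2 - s*t)*V1 - t*(u1+U1)
     \<and> V3 = a3 + (s*t - e1)*a2 - (- e2 - s*t)*V2 - t*(u2+U2)"
proof -
  define P where "P = s*t - e1"
  define R where "R = - e2 - s*t"
  have "(P*a3 - R*V3 - t*(u3+U3)) + (a3 + P*a2 - V3 - R*V2 - t*(u2+U2))*l
     + (a2 + P*a1 - V2 - R*V1 - t*(u1+U1))*l^2 + (a1 - V1 - 2*B*t)*l^3 = 0" if "l \<noteq> 0" for l
  proof -
    have e: "(l - e1 + s*t) * (\<i>/2 * (a1/l + a2/l^2 + a3/l^3)) + t * (\<i>/2 * - (B + u1/l + u2/l^2 + u3/l^3))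
    - ((\<i>/2 * (B + U1/l + U2/l^2 + U3/l^3)) * t
      + (\<i>/2 * (V1/l + V2/l^2 + V3/l^3)) * (l - e2 - s*t)) = 0"
      using assms[OF that] by simp
    have "l^3 * ((l - e1 + s*t) * (\<i>/2 * (a1/l + a2/l^2 + a3/l^3)) + t * (\<i>/2 * - (B + u1/l + u2/l^2 + u3/l^3))
    - ((\<i>/2 * (B + U1/l + U2/l^2 + U3/l^3)) * t
      + (\<i>/2 * (V1/l + V2/l^2 + V3/l^3)) * (l - e2 - s*t)))
     = \<i>/2 * ((P*a3 - R*V3 - t*(u3+U3)) + (a3 + P*a2 - V3 - R*V2 - t*(u2+U2))*l
     + (a2 + P*a1 - V2 - R*V1 - t*(u1+U1))*l^2 + (a1 - V1 - 2*B*t)*l^3)"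
      using that unfolding P_def R_def
      by (simp add: field_simps power2_eq_square power3_eq_cube)
    then show ?thesis using e by simp
  qed
  from poly3_zero[OF this] have h: "a3 + P*a2 - V3 - R*V2 - t*(u2+U2) = 0"
     "a2 + P*a1 - V2 - R*V1 - t*(u1+U1) = 0" "a1 - V1 - 2*B*t = 0" by auto
  show ?thesis unfolding P_def[symmetric] R_def[symmetric]
  proof (intro conjI)
    have "V1 = V1 + (a1 - V1 - 2*B*t)" using h(3) by simp
    also have "\<dots> = a1 - 2*B*t" by (simp add: algebra_simps)
    finally show "V1 = a1 - 2*B*t" .
    have "V2 = V2 + (a2 + P*a1 - V2 - R*V1 - t*(u1+U1))" using h(2) by simp
    also have "\<dots> = a2 + P*a1 - R*V1 - t*(u1+U1)" by (simp add: algebra_simps)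
    finally show "V2 = a2 + P*a1 - R*V1 - t*(u1+U1)" .
    have "V3 = V3 + (a3 + P*a2 - V3 - R*V2 - t*(u2+U2))" using h(1) by simp
    also have "\<dots> = a3 + P*a2 - R*V2 - t*(u2+U2)" by (simp add: algebra_simps)
    finally show "V3 = a3 + P*a2 - R*V2 - t*(u2+U2)" .
  qed
qed

lemma ent21:
  fixes l e1 e2 s t B u1 u2 u3 U1 U2 U3 w1 w2 w3 W1 W2 W3 :: complex
  assumes "\<And>l. l \<noteq> 0 \<Longrightarrow>
    ((- (s^2 * t)) + (e1 - e2) * s) * (\<i>/2 * (B + u1/l + u2/l^2 + u3/l^3)) + (l - e2 - s*t) * (\<i>/2 * (w1/l + w2/l^2 + w3/l^3))
    = (\<i>/2 * (W1/l + W2/l^2 + W3/l^3)) * (l - e1 + s*t)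
      + (\<i>/2 * - (B + U1/l + U2/l^2 + U3/l^3)) * ((- (s^2 * t)) + (e1 - e2) * s)"
  shows "W1 = w1 + 2*B*((- (s^2 * t)) + (e1 - e2) * s)
     \<and> W2 = w2 + (- e2 - s*t)*w1 - (s*t - e1)*W1 + ((- (s^2 * t)) + (e1 - e2) * s)*(u1+U1)
     \<and> W3 = w3 + (- e2 - s*t)*w2 - (s*t - e1)*W2 + ((- (s^2 * t)) + (e1 - e2) * s)*(u2+U2)"
proof -
  define P where "P = s*t - e1"
  define R where "R = - e2 - s*t"
  define Q where "Q = (- (s^2 * t)) + (e1 - e2) * s"
  have "(R*w3 - P*W3 + Q*(u3+U3)) + (w3 + R*w2 - W3 - P*W2 + Q*(u2+U2))*l
     + (w2 + R*w1 - W2 - P*W1 + Q*(u1+U1))*l^2 + (w1 - W1 + 2*B*Q)*l^3 = 0" if "l \<noteq> 0" for l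
  proof -
    have e: "((- (s^2 * t)) + (e1 - e2) * s) * (\<i>/2 * (B + u1/l + u2/l^2 + u3/l^3)) + (l - e2 - s*t) * (\<i>/2 * (w1/l + w2/l^2 + w3/l^3))
    - ((\<i>/2 * (W1/l + W2/l^2 + W3/l^3)) * (l - e1 + s*t)
      + (\<i>/2 * - (B + U1/l + U2/l^2 + U3/l^3)) * ((- (s^2 * t)) + (e1 - e2) * s)) = 0"
      using assms[OF that] by simp
    have "l^3 * (((- (s^2 * t)) + (e1 - e2) * s) * (\<i>/2 * (B + u1/l + u2/l^2 + u3/l^3)) + (l - e2 - s*t) * (\<i>/2 * (w1/l + w2/l^2 + w3/l^3))
    - ((\<i>/2 * (W1/l + W2/l^2 + W3/l^3)) * (l - e1 + s*t)
      + (\<i>/2 * - (B + U1/l + U2/l^2 + U3/l^3)) * ((- (s^2 * t)) + (e1 - e2) * s)))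
     = \<i>/2 * ((R*w3 - P*W3 + Q*(u3+U3)) + (w3 + R*w2 - W3 - P*W2 + Q*(u2+U2))*l
     + (w2 + R*w1 - W2 - P*W1 + Q*(u1+U1))*l^2 + (w1 - W1 + 2*B*Q)*l^3)"
      using that unfolding P_def R_def Q_def
      by (simp add: field_simps power2_eq_square power3_eq_cube)
    then show ?thesis using e by simp
  qed
  from poly3_zero[OF this] have h: "w3 + R*w2 - W3 - P*W2 + Q*(u2+U2) = 0"
     "w2 + R*w1 - W2 - P*W1 + Q*(u1+U1) = 0" "w1 - W1 + 2*B*Q = 0" by auto
  show ?thesis unfolding P_def[symmetric] R_def[symmetric] Q_def[symmetric]
  proof (intro conjI)
    have "W1 = W1 + (w1 - W1 + 2*B*Q)" using h(3) by simp
    also have "\<dots> = w1 + 2*B*Q" by (simp add: algebra_simps)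
    finally show "W1 = w1 + 2*B*Q" .
    have "W2 = W2 + (w2 + R*w1 - W2 - P*W1 + Q*(u1+U1))" using h(2) by simp
    also have "\<dots> = w2 + R*w1 - P*W1 + Q*(u1+U1)" by (simp add: algebra_simps)
    finally show "W2 = w2 + R*w1 - P*W1 + Q*(u1+U1)" .
    have "W3 = W3 + (w3 + R*w2 - W3 - P*W2 + Q*(u2+U2))" using h(1) by simp
    also have "\<dots> = w3 + R*w2 - P*W2 + Q*(u2+U2)" by (simp add: algebra_simps)
    finally show "W3 = w3 + R*w2 - P*W2 + Q*(u2+U2)" .
  qed
qed

lemma vL_pm: "vL X l = MM (yb X)/l + MM (xb X)/l^2 + MM (zb X)/l^3"
  by (simp add: vL_def MM_def)
lemma wL_pm: "wL X l = PP (yb X)/l + PP (xb X)/l^2 + PP (zb X)/l^3"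
  by (simp add: wL_def PP_def)


theorem proposition7:
  fixes b :: real
  shows "\<exists>(A :: complex \<Rightarrow> complex \<Rightarrow> complex \<Rightarrow> complex^3^3)
           (B :: complex \<Rightarrow> complex \<Rightarrow> complex \<Rightarrow> complex^3^3)
           (X0 :: complex \<Rightarrow> complex \<Rightarrow> complex \<Rightarrow> pt9).
     \<forall>(eta :: complex) (mu1 :: complex) (mu2 :: complex) (X :: pt9) (Xb :: pt9).
       4 * mu1^2 + (uL b X eta)^2 + vL X eta * wL X eta = 0 \<longrightarrow>
       4 * mu2^2 + (uL b X (cnj eta))^2 + vL X (cnj eta) * wL X (cnj eta) = 0 \<longrightarrow>
       vL X eta \<noteq> 0 \<longrightarrow>
       tden b X eta (cnj eta) mu1 mu2 \<noteq> 0 \<longrightarrow>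
       (\<forall>l. l \<noteq> 0 \<longrightarrow>
          Mdress eta (cnj eta) (sB b X eta mu1) (tB b X eta (cnj eta) mu1 mu2) l ** Lax b X l
          = Lax b Xb l ** Mdress eta (cnj eta) (sB b X eta mu1) (tB b X eta (cnj eta) mu1 mu2) l) \<longrightarrow>
       Xb = Phi_apply (A (sB b X eta mu1) (tB b X eta (cnj eta) mu1 mu2) eta)
                      (B (sB b X eta mu1) (tB b X eta (cnj eta) mu1 mu2) eta) X
            + X0 (sB b X eta mu1) (tB b X eta (cnj eta) mu1 mu2) eta"
proof -
  define bc where "bc = complex_of_real b"
  define Pc :: "complex \<Rightarrow> complex \<Rightarrow> complex \<Rightarrow> complex" where "Pc s t e = s*t - e" for s t e
  define Rc :: "complex \<Rightarrow> complex \<Rightarrow> complex \<Rightarrow> complex" where "Rc s t e = - cnj e - s*t" for s t e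
  define Qc :: "complex \<Rightarrow> complex \<Rightarrow> complex \<Rightarrow> complex" where
    "Qc s t e = (- (s^2 * t)) + (e - cnj e) * s" for s t e
  define Af :: "complex \<Rightarrow> complex \<Rightarrow> complex \<Rightarrow> complex^3 \<Rightarrow> complex^3" where
    "Af s t e y = fromPM ((Rc s t e - Pc s t e) * PP y + 0 * MM y + (2 * Qc s t e) * y$3)
                         (0 * PP y + (Pc s t e - Rc s t e) * MM y + (-2*t) * y$3)
                         (t * PP y + (- Qc s t e) * MM y + 0 * y$3)" for s t e y
  define G :: "complex \<Rightarrow> complex \<Rightarrow> complex \<Rightarrow> complex^3 \<Rightarrow> complex^3" where
    "G s t e y = fromPM ((- Pc s t e) * PP y + 0 * MM y + (Qc s t e) * y$3)
                         (0 * PP y + (- Rc s t e) * MM y + (-t) * y$3)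
                         (0 * PP y + (- Qc s t e) * MM y + (- Pc s t e) * y$3)" for s t e y
  define c1 where "c1 s t e = fromPM (2 * Qc s t e * bc) (-2 * t * bc) 0" for s t e
  define c2 where "c2 s t e = fromPM (-2 * Pc s t e * Qc s t e * bc) (2 * Rc s t e * t * bc)
                                   (2 * Qc s t e * t * bc)" for s t e
  have linA: "Vector_Spaces.linear (*s) (*s) (Af s t e)" for s t e
    unfolding Af_def[abs_def] by (rule linear_fromPM)
  have linG: "Vector_Spaces.linear (*s) (*s) (G s t e)" for s t e
    unfolding G_def[abs_def] by (rule linear_fromPM)
  have linB: "Vector_Spaces.linear (*s) (*s) (G s t e \<circ> Af s t e)" for s t e
    using Vector_Spaces.linear_compose[OF linA linG] .
  show ?thesis
  proof (rule exI[of _ "\<lambda>s t e. matrix (Af s t e)"], rule exI[of _ "\<lambda>s t e. matrix (G s t e \<circ> Af s t e)"],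
      rule exI[of _ "\<lambda>s t e. (c1 s t e, c2 s t e, G s t e (c2 s t e))"], intro allI impI)
    fix eta mu1 mu2 :: complex and X Xb :: pt9
    assume H0: "\<forall>l. l \<noteq> 0 \<longrightarrow>
          Mdress eta (cnj eta) (sB b X eta mu1) (tB b X eta (cnj eta) mu1 mu2) l ** Lax b X l
          = Lax b Xb l ** Mdress eta (cnj eta) (sB b X eta mu1) (tB b X eta (cnj eta) mu1 mu2) l"
    have core: "Xb = Phi_apply (matrix (Af s t eta)) (matrix (G s t eta \<circ> Af s t eta)) X
            + (c1 s t eta, c2 s t eta, G s t eta (c2 s t eta))"
      if H: "\<forall>l. l \<noteq> 0 \<longrightarrow>
          Mdress eta (cnj eta) s t l ** Lax b X l = Lax b Xb l ** Mdress eta (cnj eta) s t l" for s t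
    proof -
    have E: "\<And>l. l \<noteq> 0 \<Longrightarrow> ((l - eta + s*t) * (\<i>/2 * (bc + yb X $ 3/l + xb X $ 3/l^2 + zb X $ 3/l^3))
                + t * (\<i>/2 * (PP (yb X)/l + PP (xb X)/l^2 + PP (zb X)/l^3))
          = (\<i>/2 * (bc + yb Xb $ 3/l + xb Xb $ 3/l^2 + zb Xb $ 3/l^3)) * (l - eta + s*t)
            + (\<i>/2 * (MM (yb Xb)/l + MM (xb Xb)/l^2 + MM (zb Xb)/l^3)) * ((- (s^2 * t)) + (eta - cnj eta) * s))
          \<and> ((l - eta + s*t) * (\<i>/2 * (MM (yb X)/l + MM (xb X)/l^2 + MM (zb X)/l^3))
                + t * (\<i>/2 * - (bc + yb X $ 3/l + xb X $ 3/l^2 + zb X $ 3/l^3))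
          = (\<i>/2 * (bc + yb Xb $ 3/l + xb Xb $ 3/l^2 + zb Xb $ 3/l^3)) * t
            + (\<i>/2 * (MM (yb Xb)/l + MM (xb Xb)/l^2 + MM (zb Xb)/l^3)) * (l - cnj eta - s*t))
          \<and> (((- (s^2 * t)) + (eta - cnj eta) * s) * (\<i>/2 * (bc + yb X $ 3/l + xb X $ 3/l^2 + zb X $ 3/l^3))
                + (l - cnj eta - s*t) * (\<i>/2 * (PP (yb X)/l + PP (xb X)/l^2 + PP (zb X)/l^3))
          = (\<i>/2 * (PP (yb Xb)/l + PP (xb Xb)/l^2 + PP (zb Xb)/l^3)) * (l - eta + s*t)
            + (\<i>/2 * - (bc + yb Xb $ 3/l + xb Xb $ 3/l^2 + zb Xb $ 3/l^3)) * ((- (s^2 * t)) + (eta - cnj eta) * s))"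
      using H unfolding Lax_def Mdress_def mat2_mult mat2_eq uL_def vL_pm wL_pm bc_def by blast
    have triv: "\<And>l::complex. l \<noteq> 0 \<Longrightarrow> l \<noteq> 0" by simp
    note r11 = ent11[OF conjunct1[OF E], OF triv]
    note r12 = ent12[OF conjunct1[OF conjunct2[OF E]], OF triv]
    note r21 = ent21[OF conjunct2[OF conjunct2[OF E]], OF triv]
    have Y: "yb Xb = yb X + c1 s t eta"
      by (rule pm_eq) (simp_all add: r11 r12 r21 c1_def Qc_def algebra_simps)
    have Xx: "xb Xb = Af s t eta (yb X) + xb X + c2 s t eta"
      by (rule pm_eq) (simp_all add: r11 r12 r21 Af_def c2_def Pc_def Qc_def Rc_def algebra_simps)
    have Z: "zb Xb = G s t eta (Af s t eta (yb X)) + Af s t eta (xb X) + zb X + G s t eta (c2 s t eta)"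
      by (rule pm_eq) (simp_all add: r11 r12 r21 Af_def G_def c2_def Pc_def Qc_def Rc_def algebra_simps)
    have XbE: "Xb = (yb Xb, xb Xb, zb Xb)" by (simp add: yb_def xb_def zb_def)
    show ?thesis
      unfolding Phi_apply_def matrix_works[OF linA] matrix_works[OF linB]
      by (subst XbE) (simp add: Y Xx Z prod_eq_iff algebra_simps o_def)
    qed
    show "Xb = Phi_apply (matrix (Af (sB b X eta mu1) (tB b X eta (cnj eta) mu1 mu2) eta))
                      (matrix (G (sB b X eta mu1) (tB b X eta (cnj eta) mu1 mu2) eta \<circ>
                               Af (sB b X eta mu1) (tB b X eta (cnj eta) mu1 mu2) eta)) X
            + (c1 (sB b X eta mu1) (tB b X eta (cnj eta) mu1 mu2) eta,
               c2 (sB b X eta mu1) (tB b X eta (cnj eta) mu1 mu2) eta,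
               G (sB b X eta mu1) (tB b X eta (cnj eta) mu1 mu2) eta
                 (c2 (sB b X eta mu1) (tB b X eta (cnj eta) mu1 mu2) eta))"
      using core[OF H0] .
  qed
qed

end
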